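(* Let $M_i=(Q_i,R_i,X_i,\delta_i)$, $i=1,2,3,4$, be rough finite state machines. Then $(M_1\circ M_2)\times(M_3\circ M_4)\preceq(M_1\times M_3)\circ(M_2\times M_4)$.
   Context: For a finite set $Q$ with an equivalence relation $R$ and $A\subseteq Q$, $\underline{A}$ is the union of the $R$-classes contained in $A$ and $\overline{A}$ is the union of the $R$-classes meeting $A$. A rough finite state machine (RFSM) is $M=(Q,R,X,\delta)$ with $Q$ a nonempty finite state set, $R$ an equivalence relation on $Q$, $X$ a nonempty finite input set, and $\delta$ assigning to each $(q,a)\in Q\times X$ a pair $\delta(q,a)=(\underline{\delta(q,a)},\overline{\delta(q,a)})=(\underline{A},\overline{A})$ for some $A\subseteq Q$. For equivalence relations $R,R'$ on $Q,Q'$, $R\times R'$ is the equivalence relation on $Q\times Q'$ with $((p,p'),(q,q'))\in R\times R'$ iff $(p,q)\in R$ and $(p',q')\in R'$. Full direct product: for RFSMs $N=(Q,R,X,\delta)$, $N'=(Q',R',X',\delta')$, $N\times N'=(Q\times Q',R\times R',X\times X',\delta\times\delta')$ where $(\delta\times\delta')((q,q'),(x,x'))$ has lower part $\underline{\delta(q,x)}\times\underline{\delta'(q',x')}$ and upper part $\overline{\delta(q,x)}\times\overline{\delta'(q',x')}$. Wreath product: $N\circ N'=(Q\times Q',R\times R',X^{Q'}\times X',\delta\circ\delta')$, where $X^{Q'}$ is the set of all maps $Q'\to X$, and $(\delta\circ\delta')((q,q'),(f,x'))$ has lower part $\underline{\delta(q,f(q'))}\times\underline{\delta'(q',x')}$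 and upper part $\overline{\delta(q,f(q'))}\times\overline{\delta'(q',x')}$. These constructions are applied iteratively (e.g. $(M_1\circ M_2)\times(M_3\circ M_4)$ has state set $(Q_1\times Q_2)\times(Q_3\times Q_4)$, relation $(R_1\times R_2)\times(R_3\times R_4)$ and input set $(X_1^{Q_2}\times X_2)\times(X_3^{Q_4}\times X_4)$; $(M_1\times M_3)\circ(M_2\times M_4)$ has state set $(Q_1\times Q_3)\times(Q_2\times Q_4)$ and input set $(X_1\times X_3)^{Q_2\times Q_4}\times(X_2\times X_4)$). Covering: for RFSMs $N_1=(P_1,S_1,Y_1,\mu_1)$ and $N_2=(P_2,S_2,Y_2,\mu_2)$, a covering of $N_1$ by $N_2$ is a pair $(\eta,\xi)$ with $\eta:P_2\to P_1$ surjective and $\xi:Y_1\to Y_2$ a map (extended to words by $\xi(e)=e$, $\xi(y_1\cdots y_n)=\xi(y_1)\cdots\xi(y_n)$) such that (i) $(p,q)\in S_2\Rightarrow(\eta(p),\eta(q))\in S_1$ for all $p,q\in P_2$, and (ii) for all $p\in P_2$, $y\in Y_1$: $\underline{\mu_1(\eta(p),y)}\subseteq\eta(\underline{\mu_2(p,\xi(y))})$ and $\overline{\mu_1(\eta(p),y)}\subseteq\eta(\overline{\mu_2(p,\xi(y))})$. $N_1\preceq N_2$ means such a covering exists. *)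

theory Defs
  imports "HOL-Library.FuncSet"
begin

text \<open>A rough finite state machine M = (Q, R, X, delta). The transition delta q a
  is the pair (lower approximation, upper approximation).\<close>
record ('q, 'x) rfsm =
  st :: "'q set"
  rl :: "('q \<times> 'q) set"
  inp :: "'x set"
  tr :: "'q \<Rightarrow> 'x \<Rightarrow> 'q set \<times> 'q set"

definition lower_appr :: "'q set \<Rightarrow> ('q \<times> 'q) set \<Rightarrow> 'q set \<Rightarrow> 'q set" where
  "lower_appr Q R A = \<Union>{C \<in> Q // R. C \<subseteq> A}"

definition upper_appr :: "'q set \<Rightarrow> ('q \<times> 'q) set \<Rightarrow> 'q set \<Rightarrow> 'q set" where
  "upper_appr Q R A = \<Union>{C \<in> Q // R. C \<inter> A \<noteq> {}}"

definition is_rfsm :: "('q, 'x) rfsm \<Rightarrow> bool" where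
  "is_rfsm M \<longleftrightarrow> st M \<noteq> {} \<and> finite (st M) \<and> equiv (st M) (rl M) \<and>
     inp M \<noteq> {} \<and> finite (inp M) \<and>
     (\<forall>q \<in> st M. \<forall>a \<in> inp M. \<exists>A \<subseteq> st M.
        tr M q a = (lower_appr (st M) (rl M) A, upper_appr (st M) (rl M) A))"

definition prod_rel :: "('a \<times> 'a) set \<Rightarrow> ('b \<times> 'b) set \<Rightarrow> (('a \<times> 'b) \<times> ('a \<times> 'b)) set" where
  "prod_rel R R' = {((p, p'), (q, q')). (p, q) \<in> R \<and> (p', q') \<in> R'}"

definition dprod :: "('q, 'x) rfsm \<Rightarrow> ('p, 'y) rfsm \<Rightarrow> ('q \<times> 'p, 'x \<times> 'y) rfsm" where
  "dprod N N' = \<lparr> st = st N \<times> st N', rl = prod_rel (rl N) (rl N'),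
     inp = inp N \<times> inp N',
     tr = (\<lambda>(q, q') (x, x').
        (fst (tr N q x) \<times> fst (tr N' q' x'), snd (tr N q x) \<times> snd (tr N' q' x'))) \<rparr>"

text \<open>Wreath product; X^{Q'} is the set of (extensional) maps Q' \<rightarrow> X.\<close>
definition wprod :: "('q, 'x) rfsm \<Rightarrow> ('p, 'y) rfsm \<Rightarrow> ('q \<times> 'p, ('p \<Rightarrow> 'x) \<times> 'y) rfsm" where
  "wprod N N' = \<lparr> st = st N \<times> st N', rl = prod_rel (rl N) (rl N'),
     inp = (st N' \<rightarrow>\<^sub>E inp N) \<times> inp N',
     tr = (\<lambda>(q, q') (f, x').
        (fst (tr N q (f q')) \<times> fst (tr N' q' x'), snd (tr N q (f q')) \<times> snd (tr N' q' x'))) \<rparr>"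

definition is_covering :: "('p \<Rightarrow> 'q) \<Rightarrow> ('x \<Rightarrow> 'y) \<Rightarrow> ('q, 'x) rfsm \<Rightarrow> ('p, 'y) rfsm \<Rightarrow> bool" where
  "is_covering \<eta> \<xi> N1 N2 \<longleftrightarrow>
     \<eta> ` st N2 = st N1 \<and> \<xi> ` inp N1 \<subseteq> inp N2 \<and>
     (\<forall>p \<in> st N2. \<forall>q \<in> st N2. (p, q) \<in> rl N2 \<longrightarrow> (\<eta> p, \<eta> q) \<in> rl N1) \<and>
     (\<forall>p \<in> st N2. \<forall>y \<in> inp N1.
        fst (tr N1 (\<eta> p) y) \<subseteq> \<eta> ` fst (tr N2 p (\<xi> y)) \<and>
        snd (tr N1 (\<eta> p) y) \<subseteq> \<eta> ` snd (tr N2 p (\<xi> y)))"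

definition covered_by :: "('q, 'x) rfsm \<Rightarrow> ('p, 'y) rfsm \<Rightarrow> bool" (infix "\<preceq>\<^sub>R" 50) where
  "N1 \<preceq>\<^sub>R N2 \<longleftrightarrow> (\<exists>\<eta> \<xi>. is_covering \<eta> \<xi> N1 N2)"

end

theory Submission
  imports Defs
begin

theorem proposition3p2:
  fixes M1 :: "('q1, 'x1) rfsm" and M2 :: "('q2, 'x2) rfsm"
    and M3 :: "('q3, 'x3) rfsm" and M4 :: "('q4, 'x4) rfsm"
  assumes "is_rfsm M1" and "is_rfsm M2" and "is_rfsm M3" and "is_rfsm M4"
  shows "dprod (wprod M1 M2) (wprod M3 M4) \<preceq>\<^sub>R wprod (dprod M1 M3) (dprod M2 M4)"
proof -
  define \<eta> :: "('q1 \<times> 'q3) \<times> ('q2 \<times> 'q4) \<Rightarrow> ('q1 \<times> 'q2) \<times> ('q3 \<times> 'q4)" where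
    "\<eta> = (\<lambda>((a,c),(b,d)). ((a,b),(c,d)))"
  define \<xi> :: "(('q2 \<Rightarrow> 'x1) \<times> 'x2) \<times> (('q4 \<Rightarrow> 'x3) \<times> 'x4) \<Rightarrow> (('q2 \<times> 'q4 \<Rightarrow> 'x1 \<times> 'x3) \<times> ('x2 \<times> 'x4))" where
    "\<xi> = (\<lambda>((f,x2),(g,x4)). (\<lambda>(b,d). if b \<in> st M2 \<and> d \<in> st M4 then (f b, g d) else undefined, (x2,x4)))"
  have "is_covering \<eta> \<xi> (dprod (wprod M1 M2) (wprod M3 M4)) (wprod (dprod M1 M3) (dprod M2 M4))"
    unfolding is_covering_def
  proof (intro conjI ballI impI)
    show "\<eta> ` st (wprod (dprod M1 M3) (dprod M2 M4)) = st (dprod (wprod M1 M2) (wprod M3 M4))"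
      unfolding \<eta>_def dprod_def wprod_def by (force simp: image_iff)
    show "\<xi> ` inp (dprod (wprod M1 M2) (wprod M3 M4)) \<subseteq> inp (wprod (dprod M1 M3) (dprod M2 M4))"
      unfolding \<xi>_def dprod_def wprod_def by (auto simp: PiE_def Pi_def extensional_def)
  next
    fix p q assume "p \<in> st (wprod (dprod M1 M3) (dprod M2 M4))" "q \<in> st (wprod (dprod M1 M3) (dprod M2 M4))"
      "(p, q) \<in> rl (wprod (dprod M1 M3) (dprod M2 M4))"
    then show "(\<eta> p, \<eta> q) \<in> rl (dprod (wprod M1 M2) (wprod M3 M4))"
      unfolding \<eta>_def dprod_def wprod_def prod_rel_def by auto
  next
    fix p y assume p: "p \<in> st (wprod (dprod M1 M3) (dprod M2 M4))"
      and y: "y \<in> inp (dprod (wprod M1 M2) (wprod M3 M4))"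
    obtain a c b d where pe: "p = ((a,c),(b,d))" by (metis prod.exhaust)
    obtain f x2 g x4 where ye: "y = ((f,x2),(g,x4))" by (metis prod.exhaust)
    have bd: "b \<in> st M2" "d \<in> st M4" using p pe unfolding dprod_def wprod_def by auto
    have e1: "fst (tr (dprod (wprod M1 M2) (wprod M3 M4)) (\<eta> p) y) = \<eta> ` fst (tr (wprod (dprod M1 M3) (dprod M2 M4)) p (\<xi> y))"
      unfolding pe ye \<eta>_def \<xi>_def dprod_def wprod_def using bd by (force simp: image_iff)
    have e2: "snd (tr (dprod (wprod M1 M2) (wprod M3 M4)) (\<eta> p) y) = \<eta> ` snd (tr (wprod (dprod M1 M3) (dprod M2 M4)) p (\<xi> y))"
      unfolding pe ye \<eta>_def \<xi>_def dprod_def wprod_def using bd by (force simp: image_iff)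
    show "fst (tr (dprod (wprod M1 M2) (wprod M3 M4)) (\<eta> p) y) \<subseteq> \<eta> ` fst (tr (wprod (dprod M1 M3) (dprod M2 M4)) p (\<xi> y))"
      using e1 by simp
    show "snd (tr (dprod (wprod M1 M2) (wprod M3 M4)) (\<eta> p) y) \<subseteq> \<eta> ` snd (tr (wprod (dprod M1 M3) (dprod M2 M4)) p (\<xi> y))"
      using e2 by simp
  qed
  then show ?thesis unfolding covered_by_def by blast
qed

end
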